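(* Let $X$ and $Y$ be real Banach spaces with $Y\neq\{0\}$. Then the adjoint $(\beta_X^Y)^*:X^*\to F_Y(X)^*$ is an isometry.
   Context: $Lip_0(X,Y)$ is the Banach space of Lipschitz maps $f:X\to Y$ with $f(0)=0$ and norm $Lip(f)=\sup_{x\neq y}\|f(x)-f(y)\|/\|x-y\|$. For $x\in X$, $\delta_x^Y\in L(Lip_0(X,Y),Y)$ is evaluation $\delta_x^Y(f)=f(x)$. $F_Y(X)$ is the norm-closed linear span of $\{\delta_x^Y:x\in X\}$ in $L(Lip_0(X,Y),Y)$. $\beta_X^Y:F_Y(X)\to X$ is the bounded linear contraction given on finite combinations by $\beta_X^Y(\sum_{i}\alpha_i\delta_{x_i}^Y)=\sum_i\alpha_ix_i$ and extended by continuity. *)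

theory Defs
  imports "HOL-Analysis.Analysis"
begin

definition lip0 :: "('a::real_normed_vector \<Rightarrow> 'b::real_normed_vector) set" where
  "lip0 = {f. f 0 = 0 \<and> (\<exists>C. C-lipschitz_on UNIV f)}"

definition lipball :: "('a::real_normed_vector \<Rightarrow> 'b::real_normed_vector) set" where
  "lipball = {f. f 0 = 0 \<and> 1-lipschitz_on UNIV f}"

text \<open>Elements of L(Lip_0(X,Y),Y): bounded linear operators on Lip_0(X,Y),
  represented as functions on all maps X \<Rightarrow> Y which vanish outside Lip_0(X,Y).\<close>
definition lip_op :: "(('a::real_normed_vector \<Rightarrow> 'b::real_normed_vector) \<Rightarrow> 'b) \<Rightarrow> bool" where
  "lip_op \<mu> \<longleftrightarrow> (\<forall>f. f \<notin> lip0 \<longrightarrow> \<mu> f = 0)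
     \<and> (\<forall>f\<in>lip0. \<forall>g\<in>lip0. \<mu> (\<lambda>x. f x + g x) = \<mu> f + \<mu> g)
     \<and> (\<forall>c. \<forall>f\<in>lip0. \<mu> (\<lambda>x. c *\<^sub>R f x) = c *\<^sub>R \<mu> f)
     \<and> (\<exists>B. \<forall>f\<in>lipball. norm (\<mu> f) \<le> B)"

definition opnorm :: "(('a::real_normed_vector \<Rightarrow> 'b::real_normed_vector) \<Rightarrow> 'b) \<Rightarrow> real" where
  "opnorm \<mu> = (SUP f\<in>lipball. norm (\<mu> f))"

definition delta :: "'a::real_normed_vector \<Rightarrow> ('a \<Rightarrow> 'b::real_normed_vector) \<Rightarrow> 'b" where
  "delta x = (\<lambda>f. if f \<in> lip0 then f x else 0)"

definition fspan :: "((('a::real_normed_vector \<Rightarrow> 'b::real_normed_vector) \<Rightarrow> 'b)) set" where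
  "fspan = {\<mu>. \<exists>n (\<alpha>::nat \<Rightarrow> real) (xs::nat \<Rightarrow> 'a).
              \<mu> = (\<lambda>f. \<Sum>i<n. \<alpha> i *\<^sub>R delta (xs i) f)}"

definition FY :: "((('a::real_normed_vector \<Rightarrow> 'b::real_normed_vector) \<Rightarrow> 'b)) set" where
  "FY = {\<mu>. lip_op \<mu> \<and> (\<exists>s. (\<forall>n. s n \<in> fspan) \<and>
              (\<lambda>n. opnorm (\<lambda>f. \<mu> f - s n f)) \<longlonglongrightarrow> 0)}"

definition beta0 :: "(('a::real_normed_vector \<Rightarrow> 'b::real_normed_vector) \<Rightarrow> 'b) \<Rightarrow> 'a" where
  "beta0 \<mu> = (THE x. \<exists>n (\<alpha>::nat \<Rightarrow> real) xs.
              \<mu> = (\<lambda>f. \<Sum>i<n. \<alpha> i *\<^sub>R delta (xs i) f) \<and> x = (\<Sum>i<n. \<alpha> i *\<^sub>R xs i))"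

definition beta :: "(('a::real_normed_vector \<Rightarrow> 'b::real_normed_vector) \<Rightarrow> 'b) \<Rightarrow> 'a" where
  "beta \<mu> = (THE x. \<forall>s. ((\<forall>n. s n \<in> fspan) \<and> (\<lambda>n. opnorm (\<lambda>f. \<mu> f - s n f)) \<longlonglongrightarrow> 0)
                  \<longrightarrow> (\<lambda>n. beta0 (s n)) \<longlonglongrightarrow> x)"

end

theory Submission
  imports Defs
begin


definition plin :: "'a::real_normed_vector set \<Rightarrow> ('a \<Rightarrow> real) \<Rightarrow> bool" where
  "plin W g \<longleftrightarrow> (\<forall>v\<in>W. \<forall>w\<in>W. g (v + w) = g v + g w) \<and> (\<forall>v\<in>W. \<forall>c. g (c *\<^sub>R v) = c * g v)
     \<and> (\<forall>v\<in>W. g v \<le> norm v)"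

lemma plin_zero: "plin W g \<Longrightarrow> 0 \<in> W \<Longrightarrow> g 0 = 0"
  unfolding plin_def by (metis mult_zero_left scaleR_zero_left)

lemma plin_neg: "plin W g \<Longrightarrow> v \<in> W \<Longrightarrow> g (- v) = - g v"
  unfolding plin_def by (metis mult_minus1 scaleR_minus1_left)

lemma plin_abs: "plin W g \<Longrightarrow> subspace W \<Longrightarrow> v \<in> W \<Longrightarrow> \<bar>g v\<bar> \<le> norm v"
  using plin_neg[of W g v] unfolding plin_def
  by (metis abs_le_iff minus_le_iff norm_minus_cancel subspace_neg)

lemma plin_diff: "plin W g \<Longrightarrow> subspace W \<Longrightarrow> v \<in> W \<Longrightarrow> w \<in> W \<Longrightarrow> g (v - w) = g v - g w"
  using plin_neg[of W g w] unfolding plin_def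
  by (metis diff_conv_add_uminus subspace_neg)

lemma plin_sum: assumes g: "plin W g" and W: "subspace W" shows "finite I \<Longrightarrow> (\<And>i. i \<in> I \<Longrightarrow> v i \<in> W) \<Longrightarrow>
   g (\<Sum>i\<in>I. a i *\<^sub>R v i) = (\<Sum>i\<in>I. a i * g (v i))"
proof (induction I rule: finite_induct)
  case empty
  then show ?case using plin_zero[OF g] W by (simp add: subspace_0)
next
  case (insert x F)
  have m: "(\<Sum>i\<in>F. a i *\<^sub>R v i) \<in> W" using insert W subspace_sum subspace_scale
    by (metis (no_types, lifting) insert_iff)
  have "a x *\<^sub>R v x \<in> W" using insert W by (simp add: subspace_scale)
  then show ?case using insert m g unfolding plin_def by simp
qed

lemma plin_step:
  assumes W: "subspace W" and g: "plin W g" and u: "u \<notin> W"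
    and c: "\<And>w t. w \<in> W \<Longrightarrow> g w + t * c \<le> norm (w + t *\<^sub>R u)"
  shows "\<exists>g'. plin (span (insert u W)) g' \<and> (\<forall>w\<in>W. \<forall>t. g' (w + t *\<^sub>R u) = g w + t * c)"
proof -
  define T where "T x = (SOME k. x - k *\<^sub>R u \<in> W)" for x
  have uniq: "k = k'" if "x - k *\<^sub>R u \<in> W" "x - k' *\<^sub>R u \<in> W" for x k k'
  proof (rule ccontr)
    assume "k \<noteq> k'"
    have "(x - k' *\<^sub>R u) - (x - k *\<^sub>R u) \<in> W" using that W subspace_diff by blast
    then have "(k - k') *\<^sub>R u \<in> W" by (simp add: algebra_simps)
    then have "(1/(k - k')) *\<^sub>R ((k - k') *\<^sub>R u) \<in> W" using W subspace_scale by blast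
    with \<open>k \<noteq> k'\<close> u show False by simp
  qed
  have Tw: "T (w + t *\<^sub>R u) = t" if "w \<in> W" for w t
  proof -
    have "(w + t *\<^sub>R u) - t *\<^sub>R u \<in> W" using that by simp
    then have "(w + t *\<^sub>R u) - T (w + t *\<^sub>R u) *\<^sub>R u \<in> W" unfolding T_def by (rule someI)
    then show ?thesis using uniq \<open>(w + t *\<^sub>R u) - t *\<^sub>R u \<in> W\<close> by blast
  qed
  define g' where "g' x = g (x - T x *\<^sub>R u) + T x * c" for x
  have g'w: "g' (w + t *\<^sub>R u) = g w + t * c" if "w \<in> W" for w t
    using Tw[OF that] by (simp add: g'_def)
  have sp: "span (insert u W) = {w + t *\<^sub>R u | w t. w \<in> W}"
  proof -
    have "span (insert u W) = {x. \<exists>k. x - k *\<^sub>R u \<in> W}"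
    proof -
      have "span W = W" using W by simp
      then show ?thesis using span_insert[of u W] by (simp del: span_eq_iff)
    qed
    also have "\<dots> = {w + t *\<^sub>R u | w t. w \<in> W}"
    proof (intro set_eqI iffI)
      fix x assume "x \<in> {x. \<exists>k. x - k *\<^sub>R u \<in> W}"
      then obtain k where "x - k *\<^sub>R u \<in> W" by blast
      then show "x \<in> {w + t *\<^sub>R u | w t. w \<in> W}" by (metis (mono_tags, lifting) diff_add_cancel mem_Collect_eq)
    next
      fix x assume "x \<in> {w + t *\<^sub>R u | w t. w \<in> W}"
      then obtain w t where "x = w + t *\<^sub>R u" "w \<in> W" by blast
      then have "x - t *\<^sub>R u \<in> W" by simp
      then show "x \<in> {x. \<exists>k. x - k *\<^sub>R u \<in> W}" by blast
    qed
    finally show ?thesis .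
  qed
  have "plin (span (insert u W)) g'"
    unfolding plin_def sp
  proof (safe)
    fix w1 t1 w2 t2 assume h: "w1 \<in> W" "w2 \<in> W"
    have "w1 + t1 *\<^sub>R u + (w2 + t2 *\<^sub>R u) = (w1 + w2) + (t1 + t2) *\<^sub>R u" by (simp add: algebra_simps)
    moreover have "w1 + w2 \<in> W" using h W subspace_add by blast
    ultimately have "g' (w1 + t1 *\<^sub>R u + (w2 + t2 *\<^sub>R u)) = g (w1 + w2) + (t1 + t2) * c"
      using g'w by presburger
    then show "g' (w1 + t1 *\<^sub>R u + (w2 + t2 *\<^sub>R u)) = g' (w1 + t1 *\<^sub>R u) + g' (w2 + t2 *\<^sub>R u)"
      using g'w h g unfolding plin_def by (simp add: algebra_simps)
  next
    fix w t d assume h: "w \<in> W"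
    have "d *\<^sub>R (w + t *\<^sub>R u) = d *\<^sub>R w + (d * t) *\<^sub>R u" by (simp add: algebra_simps)
    moreover have "d *\<^sub>R w \<in> W" using h W subspace_scale by blast
    ultimately show "g' (d *\<^sub>R (w + t *\<^sub>R u)) = d * g' (w + t *\<^sub>R u)"
      using g'w h g unfolding plin_def by (simp add: algebra_simps)
  next
    fix w t assume h: "w \<in> W"
    show "g' (w + t *\<^sub>R u) \<le> norm (w + t *\<^sub>R u)" using g'w[OF h] c[OF h] by simp
  qed
  then show ?thesis using g'w by blast
qed

lemma plin_ext:
  assumes W: "subspace W" and g: "plin W g"
  shows "\<exists>g'. plin (span (insert u W)) g' \<and> (\<forall>w\<in>W. g' w = g w)"
proof (cases "u \<in> W")
  case True
  then have "span (insert u W) = W" using W by (simp add: insert_absorb)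
  then show ?thesis using g by auto
next
  case False
  have g0: "g 0 = 0" using plin_zero g W subspace_0 by blast
  define A where "A = (\<lambda>w. g w - norm (w - u)) ` W"
  define c where "c = Sup A"
  have key: "g w1 - norm (w1 - u) \<le> norm (w2 + u) - g w2" if "w1 \<in> W" "w2 \<in> W" for w1 w2
  proof -
    have "g (w1 + w2) \<le> norm (w1 + w2)" using g that W subspace_add unfolding plin_def by blast
    also have "\<dots> \<le> norm (w1 - u) + norm (w2 + u)"
      using norm_triangle_ineq[of "w1 - u" "w2 + u"] by simp
    finally show ?thesis using g that unfolding plin_def by simp
  qed
  have ne: "A \<noteq> {}" using W subspace_0 A_def by blast
  have bdd: "bdd_above A" unfolding A_def bdd_above_def
    using key[of _ 0] W subspace_0 g0 by auto
  have c1: "c \<le> norm (w + u) - g w" if "w \<in> W" for w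
    unfolding c_def using ne key that A_def by (auto intro!: cSup_least)
  have c2: "g w - norm (w - u) \<le> c" if "w \<in> W" for w
    unfolding c_def using bdd that A_def by (auto intro!: cSup_upper)
  have "g w + t * c \<le> norm (w + t *\<^sub>R u)" if w: "w \<in> W" for w t
  proof (cases t "0::real" rule: linorder_cases)
    case equal then show ?thesis using g w unfolding plin_def by simp
  next
    case greater
    define w' where "w' = (1/t) *\<^sub>R w"
    have w'W: "w' \<in> W" using W w subspace_scale w'_def by blast
    have ww: "w = t *\<^sub>R w'" using greater by (simp add: w'_def)
    have "g w = t * g w'" using ww g w'W unfolding plin_def by simp
    moreover have "norm (w + t *\<^sub>R u) = t * norm (w' + u)"
      using greater by (simp add: ww scaleR_add_right[symmetric] del: scaleR_add_right)
    moreover have "t * (g w' + c) \<le> t * norm (w' + u)"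
      using c1[OF w'W] greater by (intro mult_left_mono) auto
    ultimately show ?thesis by (simp add: algebra_simps)
  next
    case less
    define s where "s = - t"
    have s: "s > 0" using less s_def by simp
    define w' where "w' = (1/s) *\<^sub>R w"
    have w'W: "w' \<in> W" using W w subspace_scale w'_def by blast
    have ww: "w = s *\<^sub>R w'" using s by (simp add: w'_def)
    have "g w = s * g w'" using ww g w'W unfolding plin_def by simp
    moreover have "norm (w + t *\<^sub>R u) = s * norm (w' - u)"
    proof -
      have "w + t *\<^sub>R u = s *\<^sub>R (w' - u)" using ww s_def by (simp add: algebra_simps)
      then show ?thesis using s by simp
    qed
    moreover have "s * (g w' - c) \<le> s * norm (w' - u)"
      using c2[OF w'W] s by (intro mult_left_mono) auto
    ultimately show ?thesis using s_def by (simp add: algebra_simps)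
  qed
  from plin_step[OF W g False this] obtain g' where
    "plin (span (insert u W)) g'" "\<forall>w\<in>W. \<forall>t. g' (w + t *\<^sub>R u) = g w + t * c" by blast
  then show ?thesis by (metis add.right_neutral mult_zero_left scaleR_zero_left)
qed



lemma span_insert_span: "span (insert x (span T)) = span (insert x T)"
  by (simp add: span_insert span_span)

lemma hb_fin:
  fixes z :: "'a::real_normed_vector"
  shows "finite S \<Longrightarrow> \<exists>g. plin (span (insert z S)) g \<and> g z = norm z"
proof (induction S rule: finite_induct)
  case empty
  show ?case
  proof (cases "z = 0")
    case True
    then show ?thesis by (intro exI[of _ "\<lambda>_. 0"]) (simp add: plin_def)
  next
    case False
    have s0: "subspace {0::'a}" by (simp add: subspace_def)
    have p0: "plin {0::'a} (\<lambda>_. 0)" by (simp add: plin_def)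
    have "0 + t * norm z \<le> norm (w + t *\<^sub>R z)" if "w \<in> {0}" for w t
      using that by (simp add: mult_right_mono)
    from plin_step[OF s0 p0, of z "norm z"] False this obtain g' where
      g': "plin (span (insert z {0})) g'" "\<forall>w\<in>{0}. \<forall>t. g' (w + t *\<^sub>R z) = 0 + t * norm z"
      by auto
    have "g' z = norm z" using g'(2) by (metis add_0 mult_1 scaleR_one singletonI)
    moreover have "span (insert z {0}) = span (insert z {})"
      by (metis insert_commute span_insert_0)
    ultimately show ?thesis using g'(1) by auto
  qed
next
  case (insert x F)
  then obtain g where g: "plin (span (insert z F)) g" "g z = norm z" by blast
  from plin_ext[OF subspace_span g(1), of x] obtain g' where
    g': "plin (span (insert x (span (insert z F)))) g'" "\<forall>w\<in>span (insert z F). g' w = g w" by blast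
  have "g' z = norm z" using g'(2) g(2) span_superset by (metis insertI1 subsetD)
  moreover have "span (insert x (span (insert z F))) = span (insert z (insert x F))"
    by (simp add: span_insert_span insert_commute)
  ultimately show ?case using g'(1) by auto
qed

lemma mcshane:
  assumes W: "subspace W" and g: "plin W g"
  shows "\<exists>h. 1-lipschitz_on UNIV h \<and> (\<forall>v\<in>W. h v = g v)"
proof -
  define h where "h x = Inf ((\<lambda>v. g v + norm (x - v)) ` W)" for x
  have ne: "W \<noteq> {}" using W subspace_0 by blast
  have lb: "- norm x \<le> g v + norm (x - v)" if "v \<in> W" for x v
  proof -
    have "\<bar>g v\<bar> \<le> norm v" using plin_abs g W that by blast
    moreover have "norm v \<le> norm x + norm (x - v)" using norm_triangle_ineq[of "x" "v - x"] by (simp add: norm_minus_commute)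
    ultimately show ?thesis by linarith
  qed
  have bdd: "bdd_below ((\<lambda>v. g v + norm (x - v)) ` W)" for x
    unfolding bdd_below_def using lb by blast
  have hle: "h x \<le> g v + norm (x - v)" if "v \<in> W" for x v
    unfolding h_def using bdd that by (auto intro!: cInf_lower)
  have lip: "h x \<le> h y + norm (x - y)" for x y
  proof -
    have "h x - norm (x - y) \<le> g v + norm (y - v)" if "v \<in> W" for v
    proof -
      have "norm (x - v) \<le> norm (x - y) + norm (y - v)" using norm_triangle_ineq[of "x - y" "y - v"] by simp
      then show ?thesis using hle[OF that, of x] by linarith
    qed
    then have "h x - norm (x - y) \<le> h y"
      unfolding h_def[of y] using ne by (auto intro!: cInf_greatest)
    then show ?thesis by linarith
  qed
  have "1-lipschitz_on UNIV h"
  proof (rule lipschitz_onI)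
    fix x y :: 'a
    have "h x \<le> h y + norm (x - y)" "h y \<le> h x + norm (y - x)" using lip by auto
    then show "dist (h x) (h y) \<le> 1 * dist x y"
      by (simp add: dist_real_def dist_norm norm_minus_commute abs_le_iff)
  qed simp
  moreover have "h v = g v" if "v \<in> W" for v
  proof -
    have "h v \<le> g v" using hle[OF that, of v] by simp
    moreover have "g v \<le> g w + norm (v - w)" if "w \<in> W" for w
    proof -
      have "g (v - w) \<le> norm (v - w)" using g W \<open>v \<in> W\<close> that subspace_diff unfolding plin_def by blast
      then show ?thesis using plin_diff[OF g W \<open>v \<in> W\<close> that] by simp
    qed
    then have "g v \<le> h v" unfolding h_def using ne by (auto intro!: cInf_greatest)
    ultimately show ?thesis by simp
  qed
  ultimately show ?thesis by blast
qed



lemma lipball_lip0: "f \<in> lipball \<Longrightarrow> f \<in> lip0"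
  unfolding lipball_def lip0_def by blast

lemma lipball_norm: "f \<in> lipball \<Longrightarrow> norm (f x) \<le> norm x"
  unfolding lipball_def using lipschitz_onD[of 1 UNIV f x 0] by (auto simp: dist_norm)

lemma zero_lipball: "(\<lambda>_. 0) \<in> lipball"
  unfolding lipball_def by (auto intro: lipschitz_onI)

lemma lipball_ne: "lipball \<noteq> {}" using zero_lipball by blast

lemma delta_lipball: "f \<in> lipball \<Longrightarrow> delta x f = f x"
  unfolding delta_def using lipball_lip0 by auto

definition comb :: "nat \<Rightarrow> (nat \<Rightarrow> real) \<Rightarrow> (nat \<Rightarrow> 'a::real_normed_vector) \<Rightarrow> ('a \<Rightarrow> 'b::real_normed_vector) \<Rightarrow> 'b" where
  "comb n \<alpha> xs = (\<lambda>f. \<Sum>i<n. \<alpha> i *\<^sub>R delta (xs i) f)"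

lemma comb_lipball: "f \<in> lipball \<Longrightarrow> comb n \<alpha> xs f = (\<Sum>i<n. \<alpha> i *\<^sub>R f (xs i))"
  unfolding comb_def by (simp add: delta_lipball)

lemma fspan_comb: "\<nu> \<in> fspan \<longleftrightarrow> (\<exists>n \<alpha> xs. \<nu> = comb n \<alpha> xs)"
  unfolding fspan_def comb_def by blast

lemma K2:
  fixes n m :: nat
  assumes y0: "y0 \<noteq> (0::'b::real_normed_vector)"
  shows "\<exists>f\<in>(lipball::('a::real_normed_vector \<Rightarrow> 'b) set).
     norm ((\<Sum>i<n. \<alpha> i *\<^sub>R f (xs i)) - (\<Sum>j<m. \<beta> j *\<^sub>R f (ys j)))
     = norm ((\<Sum>i<n. \<alpha> i *\<^sub>R xs i) - (\<Sum>j<m. \<beta> j *\<^sub>R ys j))"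
proof -
  define z where "z = (\<Sum>i<n. \<alpha> i *\<^sub>R xs i) - (\<Sum>j<m. \<beta> j *\<^sub>R ys j)"
  define S where "S = xs ` {..<n} \<union> ys ` {..<m}"
  have "finite S" unfolding S_def by (intro finite_UnI finite_imageI finite_lessThan)
  from hb_fin[OF this, of z] obtain g where g: "plin (span (insert z S)) g" "g z = norm z" by blast
  define W where "W = span (insert z S)"
  have W: "subspace W" unfolding W_def by simp
  have gW: "plin W g" using g(1) unfolding W_def .
  from mcshane[OF W gW] obtain h where h: "1-lipschitz_on UNIV h" "\<forall>v\<in>W. h v = g v" by blast
  define e where "e = (1 / norm y0) *\<^sub>R y0"
  have ne: "norm e = 1" using y0 by (simp add: e_def)
  define f where "f x = h x *\<^sub>R e" for x
  have xsW: "xs i \<in> W" if "i < n" for i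
  proof -
    have "xs i \<in> insert z S" unfolding S_def using that by simp
    then show ?thesis unfolding W_def by (rule span_base)
  qed
  have ysW: "ys i \<in> W" if "i < m" for i
  proof -
    have "ys i \<in> insert z S" unfolding S_def using that by simp
    then show ?thesis unfolding W_def by (rule span_base)
  qed
  have A: "(\<Sum>i<n. \<alpha> i *\<^sub>R xs i) \<in> W" using xsW W
    by (intro subspace_sum) (auto intro: subspace_scale)
  have B: "(\<Sum>i<m. \<beta> i *\<^sub>R ys i) \<in> W" using ysW W
    by (intro subspace_sum) (auto intro: subspace_scale)
  have "0 \<in> W" using W subspace_0 by blast
  then have h0: "h 0 = 0" using h(2) plin_zero[OF gW] by simp
  have fl: "f \<in> lipball" unfolding lipball_def
  proof (safe)
    show "f 0 = 0" using h0 by (simp add: f_def)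
    show "1-lipschitz_on UNIV f"
    proof (rule lipschitz_onI)
      fix x y :: 'a
      have "dist (f x) (f y) = \<bar>h x - h y\<bar>"
        by (simp add: f_def dist_norm ne scaleR_diff_left[symmetric] del: scaleR_diff_left)
      also have "\<dots> \<le> 1 * dist x y" using lipschitz_onD[OF h(1), of x y] by (simp add: dist_real_def)
      finally show "dist (f x) (f y) \<le> 1 * dist x y" .
    qed simp
  qed
  have "(\<Sum>i<n. \<alpha> i *\<^sub>R f (xs i)) - (\<Sum>j<m. \<beta> j *\<^sub>R f (ys j))
      = ((\<Sum>i<n. \<alpha> i * h (xs i)) - (\<Sum>j<m. \<beta> j * h (ys j))) *\<^sub>R e"
    by (simp add: f_def scaleR_sum_left scaleR_diff_left)
  also have "(\<Sum>i<n. \<alpha> i * h (xs i)) = (\<Sum>i<n. \<alpha> i * g (xs i))" using xsW h(2) by (intro sum.cong) auto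
  also have "\<dots> = g (\<Sum>i<n. \<alpha> i *\<^sub>R xs i)"
    using plin_sum[OF gW W, of "{..<n}" xs \<alpha>] xsW by simp
  also have "(\<Sum>i<m. \<beta> i * h (ys i)) = (\<Sum>i<m. \<beta> i * g (ys i))" using ysW h(2) by (intro sum.cong) auto
  also have "\<dots> = g (\<Sum>i<m. \<beta> i *\<^sub>R ys i)"
    using plin_sum[OF gW W, of "{..<m}" ys \<beta>] ysW by simp
  also have "g (\<Sum>i<n. \<alpha> i *\<^sub>R xs i) - g (\<Sum>i<m. \<beta> i *\<^sub>R ys i) = g z"
    unfolding z_def using plin_diff[OF gW W A B] by simp
  finally have "norm ((\<Sum>i<n. \<alpha> i *\<^sub>R f (xs i)) - (\<Sum>j<m. \<beta> j *\<^sub>R f (ys j))) = norm z"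
    using g(2) ne by simp
  then show ?thesis using fl z_def by blast
qed



definition obdd :: "(('a::real_normed_vector \<Rightarrow> 'b::real_normed_vector) \<Rightarrow> 'b) \<Rightarrow> bool" where
  "obdd \<nu> \<longleftrightarrow> (\<exists>B. \<forall>f\<in>lipball. norm (\<nu> f) \<le> B)"

lemma opnorm_ge: "obdd \<nu> \<Longrightarrow> f \<in> lipball \<Longrightarrow> norm (\<nu> f) \<le> opnorm \<nu>"
  unfolding opnorm_def obdd_def by (rule cSUP_upper) (auto simp: bdd_above_def)

lemma opnorm_le: "(\<And>f. f \<in> lipball \<Longrightarrow> norm (\<nu> f) \<le> B) \<Longrightarrow> opnorm \<nu> \<le> B"
  unfolding opnorm_def using lipball_ne by (rule_tac cSUP_least) auto

lemma opnorm_nonneg: "obdd \<nu> \<Longrightarrow> 0 \<le> opnorm \<nu>"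
  using opnorm_ge[OF _ zero_lipball] norm_ge_zero order_trans by blast

lemma obdd_comb: "obdd (comb n \<alpha> xs)"
proof -
  have "norm (comb n \<alpha> xs f) \<le> (\<Sum>i<n. \<bar>\<alpha> i\<bar> * norm (xs i))" if "f \<in> lipball" for f
  proof -
    have "norm (comb n \<alpha> xs f) \<le> (\<Sum>i<n. norm (\<alpha> i *\<^sub>R f (xs i)))"
      using comb_lipball[OF that] norm_sum by metis
    also have "\<dots> \<le> (\<Sum>i<n. \<bar>\<alpha> i\<bar> * norm (xs i))"
      using lipball_norm[OF that] by (intro sum_mono) (simp add: mult_left_mono)
    finally show ?thesis .
  qed
  then show ?thesis unfolding obdd_def by blast
qed

lemma obdd_diff: "obdd a \<Longrightarrow> obdd b \<Longrightarrow> obdd (\<lambda>f. a f - b f)"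
  unfolding obdd_def
proof (elim exE)
  fix A B assume "\<forall>f\<in>lipball. norm (a f) \<le> A" "\<forall>f\<in>lipball. norm (b f) \<le> B"
  then have "\<forall>f\<in>lipball. norm (a f - b f) \<le> A + B"
    by (metis add_mono norm_triangle_ineq4 order_trans)
  then show "\<exists>B. \<forall>f\<in>lipball. norm (a f - b f) \<le> B" by blast
qed

lemma fspan_obdd: "\<nu> \<in> fspan \<Longrightarrow> obdd \<nu>"
  using fspan_comb obdd_comb by metis

lemma lip_op_obdd: "lip_op \<mu> \<Longrightarrow> obdd \<mu>"
  unfolding lip_op_def obdd_def by blast

lemma opnorm_tri:
  assumes "obdd (\<lambda>f. \<mu> f - a f)" "obdd (\<lambda>f. \<mu> f - b f)"
  shows "opnorm (\<lambda>f. a f - b f) \<le> opnorm (\<lambda>f. \<mu> f - a f) + opnorm (\<lambda>f. \<mu> f - b f)"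
proof (rule opnorm_le)
  fix f :: "'a \<Rightarrow> 'b" assume f: "f \<in> lipball"
  have "norm (a f - b f) \<le> norm (\<mu> f - a f) + norm (\<mu> f - b f)"
    by (metis norm_diff_triangle_le norm_minus_commute order_refl)
  also have "\<dots> \<le> opnorm (\<lambda>f. \<mu> f - a f) + opnorm (\<lambda>f. \<mu> f - b f)"
    using opnorm_ge[OF assms(1) f] opnorm_ge[OF assms(2) f] by simp
  finally show "norm (a f - b f) \<le> \<dots>" .
qed

context
  fixes y0 :: "'b::real_normed_vector"
  assumes y0: "y0 \<noteq> 0"
begin

lemma beta0_comb: "beta0 (comb n \<alpha> xs :: ('a::real_normed_vector \<Rightarrow> 'b) \<Rightarrow> 'b) = (\<Sum>i<n. \<alpha> i *\<^sub>R xs i)"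
  unfolding beta0_def
proof (rule the_equality)
  show "\<exists>m (\<beta>::nat \<Rightarrow> real) ys. (comb n \<alpha> xs :: ('a \<Rightarrow> 'b) \<Rightarrow> 'b) = (\<lambda>f. \<Sum>i<m. \<beta> i *\<^sub>R delta (ys i) f) \<and>
      (\<Sum>i<n. \<alpha> i *\<^sub>R xs i) = (\<Sum>i<m. \<beta> i *\<^sub>R ys i)"
    unfolding comb_def by blast
next
  fix x assume "\<exists>m (\<beta>::nat \<Rightarrow> real) ys. (comb n \<alpha> xs :: ('a \<Rightarrow> 'b) \<Rightarrow> 'b) = (\<lambda>f. \<Sum>i<m. \<beta> i *\<^sub>R delta (ys i) f) \<and>
      x = (\<Sum>i<m. \<beta> i *\<^sub>R ys i)"
  then obtain m \<beta> ys where e: "(comb n \<alpha> xs :: ('a \<Rightarrow> 'b) \<Rightarrow> 'b) = comb m \<beta> ys" and x: "x = (\<Sum>i<m. \<beta> i *\<^sub>R ys i)"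
    unfolding comb_def by blast
  from K2[OF y0, where n=n and \<alpha>=\<alpha> and xs=xs and m=m and \<beta>=\<beta> and ys=ys] obtain f :: "'a \<Rightarrow> 'b" where f: "f \<in> lipball"
    "norm ((\<Sum>i<n. \<alpha> i *\<^sub>R f (xs i)) - (\<Sum>j<m. \<beta> j *\<^sub>R f (ys j)))
     = norm ((\<Sum>i<n. \<alpha> i *\<^sub>R xs i) - (\<Sum>j<m. \<beta> j *\<^sub>R ys j))" by blast
  have "comb n \<alpha> xs f = comb m \<beta> ys f" using e by simp
  then have "norm ((\<Sum>i<n. \<alpha> i *\<^sub>R xs i) - (\<Sum>j<m. \<beta> j *\<^sub>R ys j)) = 0"
    using f comb_lipball[OF f(1)] by simp
  then show "x = (\<Sum>i<n. \<alpha> i *\<^sub>R xs i)" using x by simp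
qed

lemma beta0_lip:
  assumes "\<nu>1 \<in> fspan" "\<nu>2 \<in> fspan"
  shows "norm (beta0 \<nu>1 - beta0 \<nu>2) \<le> opnorm (\<lambda>f::'a::real_normed_vector \<Rightarrow> 'b. \<nu>1 f - \<nu>2 f)"
proof -
  obtain n \<alpha> xs where 1: "\<nu>1 = comb n \<alpha> xs" using assms(1) fspan_comb by blast
  obtain m \<beta> ys where 2: "\<nu>2 = comb m \<beta> ys" using assms(2) fspan_comb by blast
  from K2[OF y0, where n=n and \<alpha>=\<alpha> and xs=xs and m=m and \<beta>=\<beta> and ys=ys] obtain f :: "'a \<Rightarrow> 'b" where f: "f \<in> lipball"
    "norm ((\<Sum>i<n. \<alpha> i *\<^sub>R f (xs i)) - (\<Sum>j<m. \<beta> j *\<^sub>R f (ys j)))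
     = norm ((\<Sum>i<n. \<alpha> i *\<^sub>R xs i) - (\<Sum>j<m. \<beta> j *\<^sub>R ys j))" by blast
  have b1: "beta0 \<nu>1 = (\<Sum>i<n. \<alpha> i *\<^sub>R xs i)" unfolding 1 by (rule beta0_comb)
  have b2: "beta0 \<nu>2 = (\<Sum>i<m. \<beta> i *\<^sub>R ys i)" unfolding 2 by (rule beta0_comb)
  have "norm (beta0 \<nu>1 - beta0 \<nu>2) = norm (\<nu>1 f - \<nu>2 f)"
    using f b1 b2 1 2 comb_lipball[OF f(1)] by simp
  also have "\<dots> \<le> opnorm (\<lambda>f. \<nu>1 f - \<nu>2 f)"
    using opnorm_ge[OF obdd_diff[OF fspan_obdd[OF assms(1)] fspan_obdd[OF assms(2)]] f(1)] by simp
  finally show ?thesis .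
qed

lemma beta_FY:
  assumes "\<mu> \<in> (FY :: (('a::banach \<Rightarrow> 'b) \<Rightarrow> 'b) set)"
  shows "\<exists>s. (\<forall>n. s n \<in> fspan) \<and> (\<lambda>n. opnorm (\<lambda>f. \<mu> f - s n f)) \<longlonglongrightarrow> 0 \<and> (\<lambda>n. beta0 (s n)) \<longlonglongrightarrow> beta \<mu>"
    "\<forall>s. (\<forall>n. s n \<in> fspan) \<and> (\<lambda>n. opnorm (\<lambda>f. \<mu> f - s n f)) \<longlonglongrightarrow> 0 \<longrightarrow> (\<lambda>n. beta0 (s n)) \<longlonglongrightarrow> beta \<mu>"
proof -
  obtain s where s: "\<forall>n. s n \<in> fspan" "(\<lambda>n. opnorm (\<lambda>f. \<mu> f - s n f)) \<longlonglongrightarrow> 0"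
    and lo: "lip_op \<mu>" using assms unfolding FY_def by blast
  have ob: "obdd (\<lambda>f. \<mu> f - t f)" if "t \<in> fspan" for t
    using obdd_diff[OF lip_op_obdd[OF lo] fspan_obdd[OF that]] .
  have close: "norm (beta0 (s1 n) - beta0 (s2 n)) \<le> opnorm (\<lambda>f. \<mu> f - s1 n f) + opnorm (\<lambda>f. \<mu> f - s2 n f)"
    if "s1 n \<in> fspan" "s2 n \<in> fspan" for s1 s2 and n :: nat
    using beta0_lip[OF that] opnorm_tri[OF ob[OF that(1)] ob[OF that(2)]] by linarith
  define d where "d n = opnorm (\<lambda>f. \<mu> f - s n f)" for n
  have d0: "d \<longlonglongrightarrow> 0" using s(2) unfolding d_def .
  have "Cauchy (\<lambda>n. beta0 (s n))"
  proof (rule metric_CauchyI)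
    fix e :: real assume e: "0 < e"
    have "\<forall>\<^sub>F n in sequentially. dist (d n) 0 < e/2"
      using tendsto_iff[THEN iffD1, OF d0, rule_format, of "e/2"] e by simp
    then obtain M where M: "\<And>n. n \<ge> M \<Longrightarrow> \<bar>d n\<bar> < e/2" by (auto simp: eventually_sequentially dist_real_def)
    have "dist (beta0 (s m)) (beta0 (s n)) < e" if "m \<ge> M" "n \<ge> M" for m n
    proof -
      have "norm (beta0 (s m) - beta0 (s n)) \<le> opnorm (\<lambda>f. s m f - s n f)"
        using beta0_lip[OF s(1)[rule_format, of m] s(1)[rule_format, of n]] .
      also have "\<dots> \<le> d m + d n" unfolding d_def
        by (rule opnorm_tri[OF ob[OF s(1)[rule_format, of m]] ob[OF s(1)[rule_format, of n]]])
      also have "\<dots> < e" using M[OF that(1)] M[OF that(2)] by linarith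
      finally show ?thesis by (simp add: dist_norm)
    qed
    then show "\<exists>M. \<forall>m\<ge>M. \<forall>n\<ge>M. dist (beta0 (s m)) (beta0 (s n)) < e" by blast
  qed
  then obtain L where L: "(\<lambda>n. beta0 (s n)) \<longlonglongrightarrow> L" using Cauchy_convergent_iff convergent_def by blast
  have P: "(\<lambda>n. beta0 (s' n)) \<longlonglongrightarrow> L" if s': "\<forall>n. s' n \<in> fspan" "(\<lambda>n. opnorm (\<lambda>f. \<mu> f - s' n f)) \<longlonglongrightarrow> 0" for s'
  proof -
    have "(\<lambda>n. beta0 (s' n) - beta0 (s n)) \<longlonglongrightarrow> 0"
    proof (rule Lim_null_comparison)
      show "\<forall>\<^sub>F n in sequentially. norm (beta0 (s' n) - beta0 (s n)) \<le> opnorm (\<lambda>f. \<mu> f - s' n f) + opnorm (\<lambda>f. \<mu> f - s n f)"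
        using close[of s' _ s] s'(1) s(1) by (intro always_eventually) blast
      show "(\<lambda>n. opnorm (\<lambda>f. \<mu> f - s' n f) + opnorm (\<lambda>f. \<mu> f - s n f)) \<longlonglongrightarrow> 0"
        using tendsto_add[OF s'(2) s(2)] by simp
    qed
    from tendsto_add[OF this L] show ?thesis by simp
  qed
  have "beta \<mu> = L"
    unfolding beta_def
  proof (rule the_equality)
    show "\<forall>s. (\<forall>n. s n \<in> fspan) \<and> (\<lambda>n. opnorm (\<lambda>f. \<mu> f - s n f)) \<longlonglongrightarrow> 0 \<longrightarrow> (\<lambda>n. beta0 (s n)) \<longlonglongrightarrow> L"
      using P by blast
    fix x assume "\<forall>s. (\<forall>n. s n \<in> fspan) \<and> (\<lambda>n. opnorm (\<lambda>f. \<mu> f - s n f)) \<longlonglongrightarrow> 0 \<longrightarrow> (\<lambda>n. beta0 (s n)) \<longlonglongrightarrow> x"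
    then have "(\<lambda>n. beta0 (s n)) \<longlonglongrightarrow> x" using s by blast
    then show "x = L" using L LIMSEQ_unique by blast
  qed
  then show "\<exists>s. (\<forall>n. s n \<in> fspan) \<and> (\<lambda>n. opnorm (\<lambda>f. \<mu> f - s n f)) \<longlonglongrightarrow> 0 \<and> (\<lambda>n. beta0 (s n)) \<longlonglongrightarrow> beta \<mu>"
    "\<forall>s. (\<forall>n. s n \<in> fspan) \<and> (\<lambda>n. opnorm (\<lambda>f. \<mu> f - s n f)) \<longlonglongrightarrow> 0 \<longrightarrow> (\<lambda>n. beta0 (s n)) \<longlonglongrightarrow> beta \<mu>"
    using s L P by blast+
qed


lemma norm_beta:
  assumes "\<mu> \<in> (FY :: (('a::banach \<Rightarrow> 'b) \<Rightarrow> 'b) set)"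
  shows "norm (beta \<mu>) \<le> opnorm \<mu>"
proof -
  obtain s where s: "\<forall>n. s n \<in> fspan" "(\<lambda>n. opnorm (\<lambda>f. \<mu> f - s n f)) \<longlonglongrightarrow> 0" "(\<lambda>n. beta0 (s n)) \<longlonglongrightarrow> beta \<mu>"
    using beta_FY[OF assms] by blast
  have lo: "lip_op \<mu>" using assms unfolding FY_def by blast
  define z where "z = (comb 0 (\<lambda>_. 0) (\<lambda>_. 0) :: ('a \<Rightarrow> 'b) \<Rightarrow> 'b)"
  have z1: "z \<in> fspan" unfolding z_def fspan_comb by blast
  have z2: "beta0 z = 0" unfolding z_def beta0_comb by simp
  have z3: "z f = 0" for f unfolding z_def by (simp add: comb_def)
  note z = z1 z2 z3
  have "norm (beta0 (s n)) \<le> opnorm \<mu> + opnorm (\<lambda>f. \<mu> f - s n f)" for n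
  proof -
    have "norm (beta0 (s n)) \<le> opnorm (\<lambda>f. s n f - z f)"
      using beta0_lip[OF s(1)[rule_format, of n] z(1)] z(2) by simp
    also have "\<dots> \<le> opnorm \<mu> + opnorm (\<lambda>f. \<mu> f - s n f)"
    proof (rule opnorm_le)
      fix f :: "'a \<Rightarrow> 'b" assume f: "f \<in> lipball"
      have "norm (s n f - z f) \<le> norm (\<mu> f) + norm (\<mu> f - s n f)"
        using z(3) norm_triangle_ineq4[of "\<mu> f" "\<mu> f - s n f"] by simp
      also have "\<dots> \<le> opnorm \<mu> + opnorm (\<lambda>f. \<mu> f - s n f)"
        using opnorm_ge[OF lip_op_obdd[OF lo] f] opnorm_ge[OF obdd_diff[OF lip_op_obdd[OF lo] fspan_obdd[OF s(1)[rule_format, of n]]] f]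
        by simp
      finally show "norm (s n f - z f) \<le> opnorm \<mu> + opnorm (\<lambda>f. \<mu> f - s n f)" .
    qed
    finally show ?thesis .
  qed
  moreover have "(\<lambda>n. opnorm \<mu> + opnorm (\<lambda>f. \<mu> f - s n f)) \<longlonglongrightarrow> opnorm \<mu> + 0"
    using s(2) by (intro tendsto_add) auto
  ultimately show ?thesis using tendsto_norm[OF s(3)]
    by (intro LIMSEQ_le[of "\<lambda>n. norm (beta0 (s n))" _ "\<lambda>n. opnorm \<mu> + opnorm (\<lambda>f. \<mu> f - s n f)"]) auto
qed

lemma delta_FY:
  fixes x :: "'a::banach"
  shows "(delta x :: ('a \<Rightarrow> 'b) \<Rightarrow> 'b) \<in> FY" "opnorm (delta x :: ('a \<Rightarrow> 'b) \<Rightarrow> 'b) \<le> norm x"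
    "beta (delta x :: ('a \<Rightarrow> 'b) \<Rightarrow> 'b) = x"
proof -
  have dc: "(delta x :: ('a \<Rightarrow> 'b) \<Rightarrow> 'b) = comb 1 (\<lambda>_. 1) (\<lambda>_. x)"
    by (auto simp: comb_def)
  have fs: "(delta x :: ('a \<Rightarrow> 'b) \<Rightarrow> 'b) \<in> fspan" using dc fspan_comb by blast
  have add: "(\<lambda>y. f y + g y) \<in> lip0" if "f \<in> lip0" "g \<in> lip0" for f g :: "'a \<Rightarrow> 'b"
    using that unfolding lip0_def by (auto intro: lipschitz_on_add)
  have sc: "(\<lambda>y. c *\<^sub>R f y) \<in> lip0" if "f \<in> lip0" for f :: "'a \<Rightarrow> 'b" and c
    using that unfolding lip0_def by (auto intro: lipschitz_on_cmult)
  have bd: "norm (delta x f) \<le> norm x" if "f \<in> lipball" for f :: "'a \<Rightarrow> 'b"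
    using delta_lipball[OF that] lipball_norm[OF that] by simp
  have lo: "lip_op (delta x :: ('a \<Rightarrow> 'b) \<Rightarrow> 'b)"
    unfolding lip_op_def
  proof (intro conjI)
    show "\<exists>B. \<forall>f\<in>lipball. norm (delta x f :: 'b) \<le> B" using bd by blast
  qed (use add sc in \<open>auto simp: delta_def\<close>)
  have o0: "opnorm (\<lambda>f::'a \<Rightarrow> 'b. delta x f - delta x f) = 0"
  proof -
    have "(lipball :: ('a \<Rightarrow> 'b) set) \<noteq> {}" by (rule lipball_ne)
    then show ?thesis unfolding opnorm_def by simp
  qed
  show FY: "(delta x :: ('a \<Rightarrow> 'b) \<Rightarrow> 'b) \<in> FY"
    unfolding FY_def using lo fs o0 by (auto intro!: exI[of _ "\<lambda>_. delta x"])
  show "opnorm (delta x :: ('a \<Rightarrow> 'b) \<Rightarrow> 'b) \<le> norm x" using bd by (rule opnorm_le)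
  have "(\<lambda>n. beta0 (delta x :: ('a \<Rightarrow> 'b) \<Rightarrow> 'b)) \<longlonglongrightarrow> beta (delta x :: ('a \<Rightarrow> 'b) \<Rightarrow> 'b)"
    using beta_FY(2)[OF FY] fs o0 by auto
  moreover have "beta0 (delta x :: ('a \<Rightarrow> 'b) \<Rightarrow> 'b) = x" unfolding dc beta0_comb by simp
  ultimately show "beta (delta x :: ('a \<Rightarrow> 'b) \<Rightarrow> 'b) = x" using LIMSEQ_const_iff by metis
qed

end

theorem mainTheorem7:
  fixes \<phi> :: "'a::banach \<Rightarrow>\<^sub>L real"
  assumes "\<exists>y::'b::banach. y \<noteq> 0"
  shows "(SUP \<mu>\<in>{\<mu>\<in>(FY :: (('a \<Rightarrow> 'b) \<Rightarrow> 'b) set). opnorm \<mu> \<le> 1}. \<bar>\<phi> (beta \<mu>)\<bar>) = norm \<phi>"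
proof -
  obtain y0 :: 'b where y0: "y0 \<noteq> 0" using assms by blast
  define M where "M = {\<mu>\<in>(FY :: (('a \<Rightarrow> 'b) \<Rightarrow> 'b) set). opnorm \<mu> \<le> 1}"
  have up: "\<bar>\<phi> (beta \<mu>)\<bar> \<le> norm \<phi>" if "\<mu> \<in> M" for \<mu>
  proof -
    have "\<bar>\<phi> (beta \<mu>)\<bar> \<le> norm \<phi> * norm (beta \<mu>)" using norm_blinfun[of \<phi> "beta \<mu>"] by simp
    also have "\<dots> \<le> norm \<phi> * 1"
      using that norm_beta[OF y0, of \<mu>] unfolding M_def by (intro mult_left_mono) auto
    finally show ?thesis by simp
  qed
  have dM: "(delta x :: ('a \<Rightarrow> 'b) \<Rightarrow> 'b) \<in> M" "beta (delta x :: ('a \<Rightarrow> 'b) \<Rightarrow> 'b) = x" if "norm x \<le> 1" for x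
    using delta_FY[OF y0, of x] that unfolding M_def by auto
  have ne: "M \<noteq> {}" using dM[of 0] by auto
  have bdd: "bdd_above ((\<lambda>\<mu>. \<bar>\<phi> (beta \<mu>)\<bar>) ` M)" using up by (auto simp: bdd_above_def)
  define S where "S = (SUP \<mu>\<in>M. \<bar>\<phi> (beta \<mu>)\<bar>)"
  have ge: "\<bar>\<phi> x\<bar> \<le> S" if "norm x \<le> 1" for x
    using cSUP_upper[OF dM(1)[OF that] bdd] dM(2)[OF that] unfolding S_def by simp
  have "S \<le> norm \<phi>" unfolding S_def using ne up by (auto intro!: cSUP_least)
  moreover have "norm \<phi> \<le> S"
  proof (rule norm_blinfun_bound)
    show "0 \<le> S" using ge[of 0] by simp
    fix x :: 'a
    show "norm (\<phi> x) \<le> S * norm x"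
    proof (cases "x = 0")
      case True then show ?thesis by simp
    next
      case False
      define x' where "x' = (1 / norm x) *\<^sub>R x"
      have "norm x' \<le> 1" using False by (simp add: x'_def)
      then have "\<bar>\<phi> x'\<bar> \<le> S" by (rule ge)
      moreover have "\<phi> x = norm x * \<phi> x'" using False by (simp add: x'_def blinfun.scaleR_right)
      ultimately show ?thesis using False by (simp add: abs_mult mult.commute mult_left_mono)
    qed
  qed
  ultimately show ?thesis unfolding S_def M_def by simp
qed


end
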